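(* Let $p\in(1,\infty)$. Let $K>0$, $M\ge0$ and $\alpha<-(p-1)$, and define $F,G:[0,M]\to\mathbb{R}$ by $$F(x)=\frac1\alpha\big((x+K)^\alpha-(M+K)^\alpha\big),\qquad G(x)=\frac{p}{\alpha+p-1}(x+K)^{\frac{\alpha+p-1}{p}}.$$ Then there exists $C>0$ depending only on $p$ such that for all $x,y\in[0,M]$ and all $a,b\ge0$, $$|x-y|^{p-2}(x-y)\big(F(x)a^p-F(y)b^p\big)\ge\frac12|G(x)-G(y)|^p\max\{a^p,b^p\}-C\Big(1+\Big(\frac{|\alpha+p-1|}{|\alpha|}\Big)^p\Big)\max\{|G(x)|^p,|G(y)|^p\}|a-b|^p.$$
   Context: Convention: for $x=y$ the factor $|x-y|^{p-2}(x-y)$ is interpreted as $0$. *)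

theory Defs
  imports "HOL-Analysis.Analysis"
begin

definition sgnpow :: "real \<Rightarrow> real \<Rightarrow> real" where
  "sgnpow p t = (if t = 0 then 0 else \<bar>t\<bar> powr (p - 2) * t)"

definition Ffun :: "real \<Rightarrow> real \<Rightarrow> real \<Rightarrow> real \<Rightarrow> real" where
  "Ffun K M \<alpha> x = (1 / \<alpha>) * ((x + K) powr \<alpha> - (M + K) powr \<alpha>)"

definition Gfun :: "real \<Rightarrow> real \<Rightarrow> real \<Rightarrow> real \<Rightarrow> real" where
  "Gfun p K \<alpha> x = (p / (\<alpha> + p - 1)) * (x + K) powr ((\<alpha> + p - 1) / p)"

end

theory Submission
  imports Defs
begin

lemma tangent_powr:
  fixes p c g :: real
  assumes p: "1 \<le> p" and c: "0 < c" and g: "0 \<le> g"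
  shows "c powr p + p * c powr (p-1) * (g - c) \<le> g powr p"
proof -
  define h where "h t = t powr p - p * c powr (p-1) * t" for t
  have hd: "(h has_real_derivative (p * t powr (p-1) - p * c powr (p-1))) (at t)" if "0 < t" for t
    unfolding h_def using that
    by (auto intro!: derivative_eq_intros)
  have cp: "c powr (p-1) * c = c powr p"
    using c by (simp add: powr_diff field_simps)
  have key: "h c \<le> h g"
  proof (cases "c \<le> g")
    case True
    show ?thesis
    proof (rule deriv_nonneg_imp_mono[OF _ _ True])
      fix t assume t: "t \<in> {c..g}"
      then show "(h has_real_derivative (p * t powr (p-1) - p * c powr (p-1))) (at t)"
        using c by (intro hd) auto
      show "0 \<le> p * t powr (p-1) - p * c powr (p-1)"
        using t c p by (auto intro!: mult_left_mono powr_mono2)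
    qed
  next
    case False
    show ?thesis
    proof (cases "g = 0")
      case True
      have "h c = c powr p - p * c powr p" unfolding h_def using cp by (simp add: mult.assoc)
      also have "\<dots> \<le> 0" using p c by (simp add: mult_le_cancel_right1 )
      finally show ?thesis using True p unfolding h_def by simp
    next
      case g0: False
      show ?thesis
      proof (rule deriv_nonpos_imp_antimono[of g c])
        fix t assume t: "t \<in> {g..c}"
        then show "(h has_real_derivative (p * t powr (p-1) - p * c powr (p-1))) (at t)"
          using g g0 by (intro hd) auto
        show "p * t powr (p-1) - p * c powr (p-1) \<le> 0"
          using t c p g g0 by (auto intro!: mult_left_mono powr_mono2)
      qed (use False in auto)
    qed
  qed
  have e: "p * c powr (p-1) * (g - c) = p * c powr (p-1) * g - p * c powr p"
    using cp by (simp add: right_diff_distrib mult.assoc)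
  have e2: "p * c powr (p-1) * c = p * c powr p" using cp by (simp add: mult.assoc)
  show ?thesis using key e e2 unfolding h_def by linarith
qed

lemma rearr: "(A::real)*(p*(X*Y*H/Z)*h) = p*X*((Y*A)/Z)*(H*h)"
  by (cases "Z=0") (simp_all add: field_simps)

lemma absorb:
  fixes p P Q W \<rho> a b :: real
  assumes p: "1 < p" and P: "0 < P" and Q: "0 \<le> Q" and PW: "P \<le> W"
    and QW: "Q powr p \<le> W * \<rho> * P powr (p-1)" and rho: "0 \<le> \<rho>"
    and ab: "b < a" and b: "0 \<le> b"
  shows "(P+Q) * (a powr p - b powr p) \<le> P/2 * a powr p + p * (2*p) powr (p-1) * 2 powr p * (1+\<rho>) * W * (a-b) powr p"
proof -
  define h where "h = a - b"
  have h: "0 < h" using ab h_def by simp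
  have a: "0 < a" using ab b by simp
  have W: "0 < W" using P PW by simp
  have t: "a powr p + p * a powr (p-1) * (b - a) \<le> b powr p"
    using tangent_powr[of p a b] p a b by simp
  have diff: "a powr p - b powr p \<le> p * a powr (p-1) * h"
    using t unfolding h_def by (simp add: algebra_simps)
  define \<delta> where "\<delta> = P / (2*p*(P+Q))"
  have dpos: "0 < \<delta>" unfolding \<delta>_def using P Q p by simp
  have PQ: "0 < P + Q" using P Q by simp
  have rest_nn: "0 \<le> p * (2*p) powr (p-1) * 2 powr p * (1+\<rho>) * W * (a-b) powr p"
    using p rho W by simp
  have main: "(P+Q) * (p * a powr (p-1) * h) \<le> P/2 * a powr p + p * (2*p) powr (p-1) * 2 powr p * (1+\<rho>) * W * (a-b) powr p"
  proof (cases "h \<le> \<delta> * a")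
    case True
    have "a powr (p-1) * h \<le> a powr (p-1) * (\<delta> * a)"
      using True by (intro mult_left_mono) auto
    also have "\<dots> = \<delta> * a powr p"
      using a by (simp add: powr_diff field_simps)
    finally have "(P+Q) * (p * a powr (p-1) * h) \<le> (P+Q) * p * (\<delta> * a powr p)"
      using PQ p by (simp add: mult.assoc mult_left_mono)
    also have "\<dots> = (\<delta> * (2*p*(P+Q))) * a powr p / 2"
      by (simp add: algebra_simps)
    also have "\<delta> * (2*p*(P+Q)) = P"
      unfolding \<delta>_def using PQ p by simp
    also have "P * a powr p / 2 = P/2 * a powr p" by simp
    finally show ?thesis using rest_nn by linarith
  next
    case False
    then have alt: "a < h / \<delta>" using dpos by (simp add: field_simps)
    have "a powr (p-1) \<le> (h/\<delta>) powr (p-1)"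
      using alt a p by (intro powr_mono2) auto
    then have "(P+Q) * (p * a powr (p-1) * h) \<le> (P+Q) * (p * (h/\<delta>) powr (p-1) * h)"
      using PQ p h by (intro mult_left_mono) auto
    also have "\<dots> = p * (2*p) powr (p-1) * ((P+Q) powr p / P powr (p-1)) * h powr p"
    proof -
      have "(h/\<delta>) powr (p-1) = (2*p) powr (p-1) * (P+Q) powr (p-1) * h powr (p-1) / P powr (p-1)"
      proof -
        have "h/\<delta> = ((2*p)*(P+Q)*h)/P" unfolding \<delta>_def using P by simp
        then have "(h/\<delta>) powr (p-1) = ((2*p)*(P+Q)*h) powr (p-1) / P powr (p-1)"
          using P PQ p h by (simp add: powr_divide)
        also have "((2*p)*(P+Q)*h) powr (p-1) = (2*p) powr (p-1) * (P+Q) powr (p-1) * h powr (p-1)"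
          using P PQ p h by (simp add: powr_mult)
        finally show ?thesis .
      qed
      moreover have "h powr (p-1) * h = h powr p" using h by (simp add: powr_diff field_simps)
      moreover have "(P+Q) powr (p-1) * (P+Q) = (P+Q) powr p" using PQ by (simp add: powr_diff field_simps)
      ultimately show ?thesis using rearr[of "P+Q" p "(2*p) powr (p-1)" "(P+Q) powr (p-1)" "h powr (p-1)" "P powr (p-1)" h]
        by simp
    qed
    also have "\<dots> \<le> p * (2*p) powr (p-1) * (2 powr p * (1+\<rho>) * W) * h powr p"
    proof -
      have "P + Q \<le> 2 * max P Q" by simp
      then have "(P+Q) powr p \<le> (2 * max P Q) powr p" using PQ p by (intro powr_mono2) auto
      also have "\<dots> = 2 powr p * max P Q powr p" using P Q by (simp add: powr_mult)
      also have "\<dots> \<le> 2 powr p * (P powr p + Q powr p)"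
        using P Q by (intro mult_left_mono) (auto simp: max_def)
      finally have s1: "(P+Q) powr p \<le> 2 powr p * (P powr p + Q powr p)" .
      have pp: "P powr p / P powr (p-1) = P" using P by (simp add: powr_diff)
      have qq: "Q powr p / P powr (p-1) \<le> W * \<rho>" using QW P by (simp add: divide_le_eq)
      have "(P+Q) powr p / P powr (p-1) \<le> 2 powr p * (P powr p + Q powr p) / P powr (p-1)"
        using s1 P by (simp add: divide_right_mono)
      also have "\<dots> = 2 powr p * (P powr p / P powr (p-1) + Q powr p / P powr (p-1))"
        by (simp add: add_divide_distrib times_divide_eq_right[symmetric] del: times_divide_eq_right)
      also have "\<dots> \<le> 2 powr p * (W + W * \<rho>)"
        using pp qq PW by (intro mult_left_mono) auto
      finally have "(P+Q) powr p / P powr (p-1) \<le> 2 powr p * (1+\<rho>) * W" by (simp add: algebra_simps)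
      then show ?thesis using p h by (intro mult_right_mono mult_left_mono) auto
    qed
    finally have X: "(P+Q) * (p * a powr (p-1) * h) \<le> p * (2*p) powr (p-1) * (2 powr p * (1+\<rho>) * W) * h powr p" .
    have eqr: "p * (2*p) powr (p-1) * (2 powr p * (1+\<rho>) * W) * h powr p = p * (2*p) powr (p-1) * 2 powr p * (1+\<rho>) * W * (a-b) powr p"
      unfolding h_def by (simp add: mult_ac)
    have nn: "0 \<le> P/2 * a powr p" using P by simp
    show ?thesis using X eqr nn by linarith
  qed
  have "(P+Q) * (a powr p - b powr p) \<le> (P+Q) * (p * a powr (p-1) * h)"
    using diff PQ by (intro mult_left_mono) auto
  with main show ?thesis by linarith
qed

lemma holder:
  fixes p \<alpha> u v :: real
  assumes p: "1 < p" and al: "\<alpha> < -(p-1)" and v: "0 < v" and vu: "v < u"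
  shows "u powr ((\<alpha>+p-1)/p - 1) * (u-v) \<le> p/(\<alpha>+p-1) * u powr ((\<alpha>+p-1)/p) - p/(\<alpha>+p-1) * v powr ((\<alpha>+p-1)/p)"
    and "(p/(\<alpha>+p-1) * u powr ((\<alpha>+p-1)/p) - p/(\<alpha>+p-1) * v powr ((\<alpha>+p-1)/p)) powr p
         \<le> (u-v) powr (p-1) * ((1/\<alpha>) * u powr \<alpha> - (1/\<alpha>) * v powr \<alpha>)"
proof -
  define e where "e = (\<alpha>+p-1)/p"
  define c0 where "c0 = p/(\<alpha>+p-1)"
  define G where "G w = c0 * w powr e" for w
  have s0: "\<alpha>+p-1 \<noteq> 0" using al by simp
  have a0: "\<alpha> \<noteq> 0" using al p by simp
  have c0e: "c0 * e = 1" unfolding c0_def e_def using s0 p by simp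
  have dG: "(G has_real_derivative w powr (e-1)) (at w)" if "0<w" for w
  proof -
    have "(G has_real_derivative c0 * (e * w powr (e-1))) (at w)"
      unfolding G_def using that by (intro DERIV_cmult has_real_derivative_powr)
    moreover have "c0 * (e * w powr (e-1)) = w powr (e-1)" using c0e by (simp add: mult.assoc[symmetric])
    ultimately show ?thesis by simp
  qed
  have dF: "((\<lambda>w. (1/\<alpha>) * w powr \<alpha>) has_real_derivative w powr (\<alpha>-1)) (at w)" if "0<w" for w
  proof -
    have "((\<lambda>w. (1/\<alpha>) * w powr \<alpha>) has_real_derivative (1/\<alpha>) * (\<alpha> * w powr (\<alpha>-1))) (at w)"
      using that by (intro DERIV_cmult has_real_derivative_powr)
    moreover have "(1/\<alpha>) * (\<alpha> * w powr (\<alpha>-1)) = w powr (\<alpha>-1)" using a0 by simp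
    ultimately show ?thesis by simp
  qed
  have em: "e - 1 \<le> 0" unfolding e_def using al p by (simp add: divide_le_eq)
  have lin: "u powr (e-1) * u - u powr (e-1) * v \<le> G u - G v"
  proof -
    have "(\<lambda>w. G w - u powr (e-1) * w) v \<le> (\<lambda>w. G w - u powr (e-1) * w) u"
    proof (rule deriv_nonneg_imp_mono[of v u])
      fix w assume w: "w \<in> {v..u}"
      then show "((\<lambda>w. G w - u powr (e-1) * w) has_real_derivative (w powr (e-1) - u powr (e-1) * 1)) (at w)"
        using v by (intro derivative_intros dG) auto
      show "0 \<le> w powr (e-1) - u powr (e-1) * 1"
        using w v em by (auto intro!: powr_mono2')
    qed (use vu in auto)
    then show ?thesis by simp
  qed
  then show "u powr ((\<alpha>+p-1)/p - 1) * (u-v) \<le> p/(\<alpha>+p-1) * u powr ((\<alpha>+p-1)/p) - p/(\<alpha>+p-1) * v powr ((\<alpha>+p-1)/p)"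
    unfolding G_def e_def c0_def by (simp add: right_diff_distrib)
  define c where "c = (G u - G v) / (u - v)"
  have cpos: "0 < c"
  proof -
    have "0 < u powr (e-1) * (u - v)" using vu v by simp
    then have "0 < G u - G v" using lin by (simp add: right_diff_distrib)
    then show ?thesis unfolding c_def using vu by simp
  qed
  have cd: "c * (u - v) = G u - G v" unfolding c_def using vu by simp
  define K where "K = p * c powr (p-1)"
  define \<phi> where "\<phi> w = (1/\<alpha>) * w powr \<alpha> - c powr p * w - K * (G w - c * w)" for w
  have "\<phi> v \<le> \<phi> u"
  proof (rule deriv_nonneg_imp_mono[of v u])
    fix w assume w: "w \<in> {v..u}"
    then have w0: "0 < w" using v by auto
    have d1: "((\<lambda>z. G z - c*z) has_real_derivative (w powr (e-1) - c * 1)) (at w)"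
      by (intro DERIV_diff DERIV_cmult dG[OF w0] DERIV_ident)
    show "(\<phi> has_real_derivative (w powr (\<alpha>-1) - c powr p * 1 - K * (w powr (e-1) - c * 1))) (at w)"
      unfolding \<phi>_def by (intro DERIV_diff DERIV_cmult d1 dF[OF w0] DERIV_ident)
    have "c powr p + p * c powr (p-1) * (w powr (e-1) - c) \<le> (w powr (e-1)) powr p"
      using tangent_powr[of p c "w powr (e-1)"] p cpos by simp
    also have "(w powr (e-1)) powr p = w powr (\<alpha>-1)"
    proof -
      have "((\<alpha>+p-1)/p - 1) * p = \<alpha> - 1" using p by (simp add: field_simps)
      then show ?thesis unfolding powr_powr e_def by simp
    qed
    finally show "0 \<le> w powr (\<alpha>-1) - c powr p * 1 - K * (w powr (e-1) - c * 1)"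
      unfolding K_def by simp
  qed (use vu in auto)
  then have A: "(1/\<alpha>) * v powr \<alpha> - c powr p * v - K * (G v - c * v) \<le> (1/\<alpha>) * u powr \<alpha> - c powr p * u - K * (G u - c * u)"
    unfolding \<phi>_def .
  have B0: "(G u - c * u) - (G v - c * v) = 0" using cd by (simp add: algebra_simps)
  have B: "K * (G u - c * u) - K * (G v - c * v) = 0"
    using B0 by (metis mult_zero_right right_diff_distrib)
  have C: "c powr p * (u - v) = c powr p * u - c powr p * v" by (simp add: right_diff_distrib)
  have "c powr p * (u - v) \<le> (1/\<alpha>) * u powr \<alpha> - (1/\<alpha>) * v powr \<alpha>"
    using A B C by linarith
  then have "(u-v) powr (p-1) * (c powr p * (u - v)) \<le> (u-v) powr (p-1) * ((1/\<alpha>) * u powr \<alpha> - (1/\<alpha>) * v powr \<alpha>)"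
    by (intro mult_left_mono) auto
  moreover have "(u-v) powr (p-1) * (c powr p * (u - v)) = (G u - G v) powr p"
  proof -
    have "(u-v) powr (p-1) * (u-v) = (u-v) powr p" using vu by (simp add: powr_diff field_simps)
    then have "(u-v) powr (p-1) * (c powr p * (u - v)) = c powr p * (u-v) powr p" by (simp add: mult_ac)
    also have "\<dots> = (c * (u-v)) powr p" using cpos vu by (simp add: powr_mult)
    finally show ?thesis using cd by simp
  qed
  ultimately show "(p/(\<alpha>+p-1) * u powr ((\<alpha>+p-1)/p) - p/(\<alpha>+p-1) * v powr ((\<alpha>+p-1)/p)) powr p
         \<le> (u-v) powr (p-1) * ((1/\<alpha>) * u powr \<alpha> - (1/\<alpha>) * v powr \<alpha>)"
    unfolding G_def e_def c0_def by simp
qed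

lemma lnid: "(p-1)*((al-1)*lu + p*ld) + (al+p-1)*lv + p*(lp - lq) - p*((p-1)*ld + al*lu - lq) = (al+p-1)*(lv - lu) + p*(lp::real)"
  by (simp add: algebra_simps)

lemma core:
  fixes p \<alpha> u v N a b :: real
  assumes p: "1 < p" and al: "\<alpha> < -(p-1)" and v: "0 < v" and vu: "v < u" and uN: "u \<le> N"
    and a: "0 \<le> a" and b: "0 \<le> b"
  shows "(u-v) powr (p-1) * ((1/\<alpha>)*(u powr \<alpha> - N powr \<alpha>) * a powr p - (1/\<alpha>)*(v powr \<alpha> - N powr \<alpha>) * b powr p)
     \<ge> 1/2 * \<bar>p/(\<alpha>+p-1) * u powr ((\<alpha>+p-1)/p) - p/(\<alpha>+p-1) * v powr ((\<alpha>+p-1)/p)\<bar> powr p * max (a powr p) (b powr p)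
       - p * (2*p) powr (p-1) * 2 powr p * (1 + (\<bar>\<alpha> + p - 1\<bar> / \<bar>\<alpha>\<bar>) powr p)
           * max (\<bar>p/(\<alpha>+p-1) * u powr ((\<alpha>+p-1)/p)\<bar> powr p) (\<bar>p/(\<alpha>+p-1) * v powr ((\<alpha>+p-1)/p)\<bar> powr p) * \<bar>a - b\<bar> powr p"
proof -
  define e where "e = (\<alpha>+p-1)/p"
  define c0 where "c0 = p/(\<alpha>+p-1)"
  define GG where "GG w = c0 * w powr e" for w
  define FF where "FF w = (1/\<alpha>)*(w powr \<alpha> - N powr \<alpha>)" for w
  define d where "d = u - v"
  define Cp where "Cp = p * (2*p) powr (p-1) * 2 powr p"
  define \<rho> where "\<rho> = (\<bar>\<alpha> + p - 1\<bar> / \<bar>\<alpha>\<bar>) powr p"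
  define q where "q = - \<alpha>"
  define s where "s = -(\<alpha>+p-1)"
  have q: "0 < q" and s: "0 < s" using al p unfolding q_def s_def by auto
  have u: "0 < u" using v vu by simp
  have d: "0 < d" using vu d_def by simp
  have H1: "u powr (e-1) * d \<le> GG u - GG v"
    using holder(1)[OF p al v vu] unfolding GG_def e_def c0_def d_def by simp
  have H2: "(GG u - GG v) powr p \<le> d powr (p-1) * (FF u - FF v)"
    using holder(2)[OF p al v vu] unfolding GG_def e_def c0_def d_def FF_def by (simp add: algebra_simps)
  have dG: "0 < GG u - GG v" proof -
    have "0 < u powr (e-1) * d" using d u by simp
    then show ?thesis using H1 by linarith
  qed
  have c0neg: "c0 < 0" unfolding c0_def using al p by (intro divide_pos_neg) auto
  have GGu: "GG u \<le> 0" unfolding GG_def using c0neg by (simp add: mult_nonpos_nonneg)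
  have GGv: "\<bar>GG v\<bar> = - GG v" unfolding GG_def using c0neg by (simp add: mult_nonpos_nonneg)
  define P where "P = (GG u - GG v) powr p"
  define W where "W = \<bar>GG v\<bar> powr p"
  have Ppos: "0 < P" unfolding P_def using dG by simp
  have PW: "P \<le> W" unfolding P_def W_def GGv using dG GGu p by (intro powr_mono2) auto
  have maxW: "max (\<bar>GG u\<bar> powr p) (\<bar>GG v\<bar> powr p) = W"
  proof -
    have "\<bar>GG u\<bar> powr p \<le> \<bar>GG v\<bar> powr p" using GGu GGv dG p by (intro powr_mono2) auto
    then show ?thesis unfolding W_def by simp
  qed
  have absdG: "\<bar>GG u - GG v\<bar> = GG u - GG v" using dG by simp
  have FFu: "FF u \<le> 0"
  proof -
    have "N powr \<alpha> \<le> u powr \<alpha>" using al p u uN by (intro powr_mono2') auto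
    moreover have "1/\<alpha> < 0" using al p by simp
    ultimately show ?thesis unfolding FF_def by (simp add: divide_nonneg_neg)
  qed
  define Q where "Q = d powr (p-1) * (- FF u)"
  have Q0: "0 \<le> Q" unfolding Q_def using FFu by (intro mult_nonneg_nonneg) auto
  have rho0: "0 \<le> \<rho>" unfolding \<rho>_def by simp
  define X where "X = d powr (p-1) * u powr \<alpha> / q"
  define Y where "Y = u powr (e-1) * d"
  have QX: "Q \<le> X"
  proof -
    have "- FF u \<le> u powr \<alpha> / q" unfolding FF_def q_def using al p by (simp add: field_simps)
    then have "d powr (p-1) * (- FF u) \<le> d powr (p-1) * (u powr \<alpha> / q)" by (intro mult_left_mono) auto
    then show ?thesis unfolding Q_def X_def by simp
  qed
  have X0: "0 < X" unfolding X_def using d u q by simp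
  have Y0: "0 < Y" unfolding Y_def using d u by simp
  define Z where "Z = (Y powr p) powr (p-1) * (v powr (\<alpha>+p-1) * (p/q) powr p)"
  have Z0: "0 < Z" unfolding Z_def using Y0 v p q by simp
  have XZ: "X powr p \<le> Z"
  proof -
    have lnX: "ln (X powr p) = p * ((p-1) * ln d + \<alpha> * ln u - ln q)"
      unfolding X_def using d u q by (simp add: ln_mult ln_div)
    have lnZ: "ln Z = (p-1) * (p * ((e-1) * ln u + ln d)) + (\<alpha>+p-1) * ln v + p * (ln p - ln q)"
      unfolding Z_def Y_def using d u q v p by (simp add: ln_mult ln_div)
    have pe: "p * (e - 1) = \<alpha> - 1" unfolding e_def using p by (simp add: field_simps)
    have eq1: "p * ((e-1) * ln u + ln d) = (\<alpha> - 1) * ln u + p * ln d"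
      using pe by (simp add: distrib_left mult.assoc[symmetric])
    have "ln Z - ln (X powr p) = (\<alpha>+p-1) * (ln v - ln u) + p * ln p"
      unfolding lnX lnZ eq1 by (rule lnid)
    moreover have "0 \<le> (\<alpha>+p-1) * (ln v - ln u)"
      using al v vu by (intro mult_nonpos_nonpos) auto
    moreover have "0 \<le> p * ln p" using p by simp
    ultimately have lz: "ln (X powr p) \<le> ln Z" by linarith
    have "0 < X powr p" using X0 by simp
    then show ?thesis using lz Z0 by (metis ln_le_cancel_iff)
  qed
  have YP: "Y powr p \<le> P" unfolding P_def using H1 Y0 p unfolding Y_def d_def by (intro powr_mono2) auto
  have Wrho: "W * \<rho> = v powr (\<alpha>+p-1) * (p/q) powr p"
  proof -
    have "\<bar>GG v\<bar> * (\<bar>\<alpha> + p - 1\<bar> / \<bar>\<alpha>\<bar>) = (p/q) * v powr e"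
    proof -
      have a1: "\<bar>\<alpha> + p - 1\<bar> = s" unfolding s_def using al by simp
      have a2: "\<bar>\<alpha>\<bar> = q" unfolding q_def using al p by simp
      have a3: "\<alpha> + p - 1 = - s" unfolding s_def by simp
      show ?thesis unfolding GGv GG_def c0_def a1 a2 a3 using s q p by (simp add: field_simps)
    qed
    then have "(\<bar>GG v\<bar> * (\<bar>\<alpha> + p - 1\<bar> / \<bar>\<alpha>\<bar>)) powr p = ((p/q) * v powr e) powr p" by simp
    have "W * \<rho> = (\<bar>GG v\<bar> * (\<bar>\<alpha> + p - 1\<bar> / \<bar>\<alpha>\<bar>)) powr p"
      unfolding W_def \<rho>_def by (rule powr_mult[symmetric])
    also have "\<dots> = ((p/q) * v powr e) powr p" by fact
    also have "\<dots> = (p/q) powr p * (v powr e) powr p" by (rule powr_mult)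
    also have "(v powr e) powr p = v powr (\<alpha>+p-1)" unfolding powr_powr e_def using p by simp
    finally show ?thesis by (simp add: mult_ac)
  qed
  have QW: "Q powr p \<le> W * \<rho> * P powr (p-1)"
  proof -
    have "Q powr p \<le> X powr p" using QX Q0 p by (intro powr_mono2) auto
    also have "\<dots> \<le> Z" by (rule XZ)
    also have "Z \<le> P powr (p-1) * (W * \<rho>)" unfolding Z_def Wrho
      using YP Y0 p v q by (intro mult_right_mono powr_mono2) auto
    finally show ?thesis by (simp add: mult_ac)
  qed
  have H2': "P \<le> d powr (p-1) * (FF u - FF v)" using H2 unfolding P_def .
  have goal: "d powr (p-1) * (FF u * a powr p - FF v * b powr p) \<ge> 1/2 * P * max (a powr p) (b powr p) - Cp * (1 + \<rho>) * W * \<bar>a - b\<bar> powr p"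
  proof (cases "a \<le> b")
    case True
    have ab: "a powr p \<le> b powr p" using True a p by (intro powr_mono2) auto
    have "FF u * b powr p \<le> FF u * a powr p" using ab FFu by (simp add: mult_left_mono_neg)
    then have "d powr (p-1) * ((FF u - FF v) * b powr p) \<le> d powr (p-1) * (FF u * a powr p - FF v * b powr p)"
      by (intro mult_left_mono) (auto simp: algebra_simps)
    moreover have "P * b powr p \<le> d powr (p-1) * ((FF u - FF v) * b powr p)"
      using H2' by (simp add: mult.assoc[symmetric] mult_right_mono)
    moreover have "max (a powr p) (b powr p) = b powr p" using ab by simp
    moreover have "0 \<le> Cp * (1 + \<rho>) * W * \<bar>a - b\<bar> powr p" unfolding Cp_def using p rho0 PW Ppos by simp
    moreover have "0 \<le> P * b powr p" using Ppos by simp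
    ultimately show ?thesis by linarith
  next
    case False
    then have ab: "b < a" by simp
    have ab': "b powr p \<le> a powr p" using ab b p by (intro powr_mono2) auto
    have A: "(P+Q) * (a powr p - b powr p) \<le> P/2 * a powr p + Cp * (1+\<rho>) * W * (a-b) powr p"
      using absorb[OF p Ppos Q0 PW QW rho0 ab b] unfolding Cp_def by simp
    have "d powr (p-1) * (FF u * a powr p - FF v * b powr p) = d powr (p-1) * (FF u - FF v) * b powr p - Q * (a powr p - b powr p)"
      unfolding Q_def by (simp add: algebra_simps)
    moreover have "P * b powr p \<le> d powr (p-1) * (FF u - FF v) * b powr p"
      using H2' by (simp add: mult_right_mono)
    moreover have "max (a powr p) (b powr p) = a powr p" using ab' by simp
    moreover have "\<bar>a - b\<bar> = a - b" using ab by simp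
    ultimately show ?thesis using A by (simp add: algebra_simps)
  qed
  have e1: "(u-v) powr (p-1) * ((1/\<alpha>)*(u powr \<alpha> - N powr \<alpha>) * a powr p - (1/\<alpha>)*(v powr \<alpha> - N powr \<alpha>) * b powr p)
     = d powr (p-1) * (FF u * a powr p - FF v * b powr p)" by (simp add: d_def FF_def)
  have e2: "\<bar>p/(\<alpha>+p-1) * u powr ((\<alpha>+p-1)/p) - p/(\<alpha>+p-1) * v powr ((\<alpha>+p-1)/p)\<bar> powr p = P"
    using absdG unfolding P_def GG_def c0_def e_def by simp
  have e3: "max (\<bar>p/(\<alpha>+p-1) * u powr ((\<alpha>+p-1)/p)\<bar> powr p) (\<bar>p/(\<alpha>+p-1) * v powr ((\<alpha>+p-1)/p)\<bar> powr p) = W"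
    using maxW unfolding GG_def c0_def e_def by simp
  show ?thesis unfolding e1 e2 e3 using goal unfolding Cp_def \<rho>_def by simp
qed

lemma sgn_pos: "0 < t \<Longrightarrow> sgnpow p t = t powr (p-1)"
  unfolding sgnpow_def by (simp add: powr_diff field_simps power2_eq_square)

lemma sgn_neg: "t < 0 \<Longrightarrow> sgnpow p t = - ((-t) powr (p-1))"
  unfolding sgnpow_def by (simp add: powr_diff field_simps power2_eq_square)

theorem mainTheorem20:
  fixes p :: real
  assumes "1 < p"
  shows "\<exists>C>0. \<forall>K M \<alpha> x y a b. 0 < K \<longrightarrow> 0 \<le> M \<longrightarrow> \<alpha> < -(p - 1) \<longrightarrow>
     x \<in> {0..M} \<longrightarrow> y \<in> {0..M} \<longrightarrow> 0 \<le> a \<longrightarrow> 0 \<le> b \<longrightarrow>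
     sgnpow p (x - y) * (Ffun K M \<alpha> x * a powr p - Ffun K M \<alpha> y * b powr p)
     \<ge> 1/2 * \<bar>Gfun p K \<alpha> x - Gfun p K \<alpha> y\<bar> powr p * max (a powr p) (b powr p)
       - C * (1 + (\<bar>\<alpha> + p - 1\<bar> / \<bar>\<alpha>\<bar>) powr p)
           * max (\<bar>Gfun p K \<alpha> x\<bar> powr p) (\<bar>Gfun p K \<alpha> y\<bar> powr p) * \<bar>a - b\<bar> powr p"
proof (intro exI[of _ "p * (2*p) powr (p-1) * 2 powr p"] conjI allI impI)
  have p: "1 < p" by fact
  show "0 < p * (2*p) powr (p-1) * 2 powr p" using p by simp
  fix K M \<alpha> x y a b :: real
  assume K: "0 < K" and M: "0 \<le> M" and al: "\<alpha> < -(p - 1)" and x: "x \<in> {0..M}" and y: "y \<in> {0..M}"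
    and a: "0 \<le> a" and b: "0 \<le> b"
  define C where "C = p * (2*p) powr (p-1) * 2 powr p"
  have C0: "0 < C" unfolding C_def using p by simp
  have FF: "Ffun K M \<alpha> z = (1/\<alpha>)*((z+K) powr \<alpha> - (M+K) powr \<alpha>)" for z unfolding Ffun_def by simp
  have GG: "Gfun p K \<alpha> z = p/(\<alpha>+p-1) * (z+K) powr ((\<alpha>+p-1)/p)" for z unfolding Gfun_def by simp
  consider "x = y" | "y < x" | "x < y" by linarith
  then show "sgnpow p (x - y) * (Ffun K M \<alpha> x * a powr p - Ffun K M \<alpha> y * b powr p)
     \<ge> 1/2 * \<bar>Gfun p K \<alpha> x - Gfun p K \<alpha> y\<bar> powr p * max (a powr p) (b powr p)
       - p * (2*p) powr (p-1) * 2 powr p * (1 + (\<bar>\<alpha> + p - 1\<bar> / \<bar>\<alpha>\<bar>) powr p)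
           * max (\<bar>Gfun p K \<alpha> x\<bar> powr p) (\<bar>Gfun p K \<alpha> y\<bar> powr p) * \<bar>a - b\<bar> powr p"
  proof cases
    case 1
    have "0 \<le> p * (2*p) powr (p-1) * 2 powr p * (1 + (\<bar>\<alpha> + p - 1\<bar> / \<bar>\<alpha>\<bar>) powr p)
           * max (\<bar>Gfun p K \<alpha> x\<bar> powr p) (\<bar>Gfun p K \<alpha> y\<bar> powr p) * \<bar>a - b\<bar> powr p"
      using p by (intro mult_nonneg_nonneg) (auto simp: le_max_iff_disj)
    then show ?thesis using 1 by (simp add: sgnpow_def)
  next
    case 2
    have c: "y + K < x + K" "x + K \<le> M + K" "0 < y + K" using 2 x y K by auto
    have "sgnpow p (x - y) = ((x+K) - (y+K)) powr (p-1)" using 2 by (simp add: sgn_pos)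
    then show ?thesis using core[OF p al c(3) c(1) c(2) a b] unfolding FF GG by simp
  next
    case 3
    have c: "x + K < y + K" "y + K \<le> M + K" "0 < x + K" using 3 x y K by auto
    have sg: "sgnpow p (x - y) = - (((y+K) - (x+K)) powr (p-1))" using 3 by (simp add: sgn_neg)
    have e1: "\<bar>b - a\<bar> = \<bar>a - b\<bar>" by (rule abs_minus_commute)
    have e2: "\<bar>Gfun p K \<alpha> y - Gfun p K \<alpha> x\<bar> = \<bar>Gfun p K \<alpha> x - Gfun p K \<alpha> y\<bar>" by (rule abs_minus_commute)
    show ?thesis using core[OF p al c(3) c(1) c(2) b a] e1 e2 unfolding sg FF GG
      by (simp add: max.commute algebra_simps)
  qed
qed

end
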